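(* Let $p,q\ge 0$ be integers and let $\lambda=(p+1,1^{q})$. Let $z_{-q},\dots,z_p\in\mathbb{C}$ with $\Re(z_k)\ge 1$ for all $-q\le k\le p$, $\Re(z_p)>1$ and $\Re(z_{-q})>1$, and let ${\pmb s}\in T(\lambda,\mathbb{C})$ have first row $z_0,z_1,\dots,z_p$ and first column $z_0,z_{-1},\dots,z_{-q}$ (i.e. $s_{1,j}=z_{j-1}$, $s_{i,1}=z_{-(i-1)}$). Then $$\zeta_{\lambda}({\pmb s})=\sum_{j=0}^{p}(-1)^j\,\zeta(z_{j},\ldots,z_{1},z_0,z_{-1},\ldots,z_{-q})\,\zeta^{\star}(z_{j+1},\ldots,z_{p}),$$ where $\zeta^{\star}(z_{j+1},\ldots,z_{p})$ is interpreted as $1$ when $j=p$.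
   Context: Euler–Zagier multiple zeta-function and its star variant: $\zeta(s_1,\ldots,s_r)=\sum_{0<m_1<\cdots<m_r}m_1^{-s_1}\cdots m_r^{-s_r}$ and $\zeta^{\star}(s_1,\ldots,s_r)=\sum_{0<m_1\le\cdots\le m_r}m_1^{-s_1}\cdots m_r^{-s_r}$. For a partition $\lambda$, $T(\lambda,X)$ denotes the set of fillings of the Young diagram of $\lambda$ by elements of $X$, and $\mathrm{SSYT}(\lambda)$ is the set of semi-standard Young tableaux $M=(m_{ij})\in T(\lambda,\mathbb{N})$, i.e. weakly increasing along rows and strictly increasing down columns. For ${\pmb s}=(s_{ij})\in T(\lambda,\mathbb{C})$ the Schur multiple zeta-function is $\zeta_\lambda({\pmb s})=\sum_{M\in\mathrm{SSYT}(\lambda)}\prod_{(i,j)\in\lambda}m_{ij}^{-s_{ij}}$. The content of box $(i,j)$ is $j-i$; content-parametrized means $s_{ij}=z_{j-i}$. *)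

theory Defs
  imports "HOL-Analysis.Analysis"
begin

text \<open>A partition is given by the list of its row lengths (weakly decreasing, positive).
  Boxes are indexed (i,j) with 1-based row i and column j.\<close>

definition young_diagram :: "nat list \<Rightarrow> (nat \<times> nat) set" where
  "young_diagram lam = {(i,j). 1 \<le> i \<and> i \<le> length lam \<and> 1 \<le> j \<and> j \<le> lam ! (i - 1)}"

text \<open>Outside the
  diagram the filling is normalised to 0 so that each tableau is represented once.\<close>

definition SSYT :: "nat list \<Rightarrow> (nat \<times> nat \<Rightarrow> nat) set" where
  "SSYT lam = {M.
     (\<forall>x\<in>young_diagram lam. 1 \<le> M x) \<and>
     (\<forall>x. x \<notin> young_diagram lam \<longrightarrow> M x = 0) \<and>
     (\<forall>i j. (i,j) \<in> young_diagram lam \<and> (i, Suc j) \<in> young_diagram lam \<longrightarrow> M (i,j) \<le> M (i, Suc j)) \<and>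
     (\<forall>i j. (i,j) \<in> young_diagram lam \<and> (Suc i, j) \<in> young_diagram lam \<longrightarrow> M (i,j) < M (Suc i, j))}"

definition schur_zeta :: "nat list \<Rightarrow> (nat \<times> nat \<Rightarrow> complex) \<Rightarrow> complex" where
  "schur_zeta lam s =
     (\<Sum>\<^sub>\<infinity>M\<in>SSYT lam. \<Prod>x\<in>young_diagram lam. inverse (of_nat (M x) powr s x))"

definition mzeta :: "complex list \<Rightarrow> complex" where
  "mzeta s = (\<Sum>\<^sub>\<infinity>m\<in>{m :: nat list. length m = length s \<and> sorted_wrt (<) m \<and> 0 \<notin> set m}.
      \<Prod>i<length s. inverse (of_nat (m ! i) powr (s ! i)))"

definition mzeta_star :: "complex list \<Rightarrow> complex" where
  "mzeta_star s = (\<Sum>\<^sub>\<infinity>m\<in>{m :: nat list. length m = length s \<and> sorted_wrt (\<le>) m \<and> 0 \<notin> set m}.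
      \<Prod>i<length s. inverse (of_nat (m ! i) powr (s ! i)))"

end

theory Submission
  imports Defs
begin


definition G :: "nat list \<Rightarrow> (nat \<Rightarrow> complex) \<Rightarrow> complex" where
  "G m f = (\<Prod>i<length m. inverse (of_nat (m ! i) powr f i))"

lemma G_Nil[simp]: "G [] f = 1" by (simp add: G_def)

lemma G_Cons: "G (x # m) f = inverse (of_nat x powr f 0) * G m (\<lambda>i. f (Suc i))"
  unfolding G_def length_Cons prod.lessThan_Suc_shift by simp

lemma norm_summable_prod:
  fixes f :: "'a \<Rightarrow> 'c::real_normed_div_algebra" and g :: "'b \<Rightarrow> 'c"
  assumes "(\<lambda>x. norm (f x)) summable_on A" "(\<lambda>y. norm (g y)) summable_on B"
  shows "(\<lambda>(x,y). norm (f x * g y)) summable_on A \<times> B"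
proof -
  have "(\<lambda>z. norm (case z of (x,y) \<Rightarrow> f x * g y)) summable_on Sigma A (\<lambda>_. B)"
  proof (subst Infinite_Sum.abs_summable_on_Sigma_iff, intro conjI ballI)
    fix x assume "x \<in> A"
    show "(\<lambda>y. norm (case (x, y) of (x, y) \<Rightarrow> f x * g y)) summable_on B"
      using summable_on_cmult_right[OF assms(2), of "norm (f x)"] by (simp add: norm_mult)
  next
    have "(\<lambda>x. norm (\<Sum>\<^sub>\<infinity>y\<in>B. norm (case (x, y) of (x, y) \<Rightarrow> f x * g y))) =
          (\<lambda>x. norm (f x) * norm (\<Sum>\<^sub>\<infinity>y\<in>B. norm (g y)))"
      by (simp add: norm_mult infsum_cmult_right' abs_mult)
    then show "(\<lambda>x. norm (\<Sum>\<^sub>\<infinity>y\<in>B. norm (case (x, y) of (x, y) \<Rightarrow> f x * g y))) summable_on A"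
      using summable_on_cmult_left[OF assms(1)] by simp
  qed
  then show ?thesis by (simp add: case_prod_unfold)
qed

lemma infsum_prod:
  fixes f :: "'a \<Rightarrow> complex" and g :: "'b \<Rightarrow> complex"
  assumes "f summable_on A" "g summable_on B"
  shows "infsum (\<lambda>(x,y). f x * g y) (A \<times> B) = infsum f A * infsum g B"
proof -
  have "(\<lambda>(x,y). norm (f x * g y)) summable_on A \<times> B"
    by (rule norm_summable_prod) (use assms summable_on_iff_abs_summable_on_complex in auto)
  then have "(\<lambda>z. norm ((\<lambda>(x,y). f x * g y) z)) summable_on A \<times> B"
    by (simp add: case_prod_unfold)
  then have s: "(\<lambda>(x,y). f x * g y) summable_on A \<times> B"
    by (rule Infinite_Sum.abs_summable_summable)
  have "infsum (\<lambda>(x,y). f x * g y) (A \<times> B) = infsum (\<lambda>x. infsum (\<lambda>y. f x * g y) B) A"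
    using infsum_Sigma_banach[OF s] by simp
  also have "\<dots> = infsum (\<lambda>x. f x * infsum g B) A" by (simp add: infsum_cmult_right')
  also have "\<dots> = infsum f A * infsum g B" by (simp add: infsum_cmult_left')
  finally show ?thesis .
qed

definition PL :: "nat \<Rightarrow> nat list set" where
  "PL n = {m. length m = n \<and> 0 \<notin> set m}"

lemma D_summable:
  assumes c: "c > 1"
  shows "(\<lambda>m. \<Prod>i<length m. real (m ! i) powr (-c)) summable_on PL n"
proof (induction n)
  case 0
  have "PL 0 = {[]}" by (auto simp: PL_def)
  then show ?case by simp
next
  case (Suc n)
  define h where "h = (\<lambda>k::nat. real k powr (-c))"
  have hs: "(\<lambda>k. norm (h k)) summable_on {1..}"
  proof -
    have "summable (\<lambda>k. norm (norm (h k)))"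
      using summable_real_powr_iff[of "-c"] c by (simp add: h_def)
    then have "(\<lambda>k. norm (h k)) summable_on UNIV" by (rule norm_summable_imp_summable_on)
    then show ?thesis by (rule summable_on_subset_banach) auto
  qed
  have Ds: "(\<lambda>m. norm (\<Prod>i<length m. real (m ! i) powr (-c))) summable_on PL n"
  proof -
    have "(\<lambda>m. norm (\<Prod>i<length m. real (m ! i) powr (-c))) = (\<lambda>m. (\<Prod>i<length m. real (m ! i) powr (-c)))"
      by (auto intro!: ext abs_of_nonneg prod_nonneg)
    then show ?thesis using Suc.IH by simp
  qed
  have "(\<lambda>(x,y). norm (h x * (\<Prod>i<length y. real (y ! i) powr (-c)))) summable_on {1..} \<times> PL n"
    by (rule norm_summable_prod[OF hs Ds])
  then have "(\<lambda>z. norm ((\<lambda>(x,y). h x * (\<Prod>i<length y. real (y ! i) powr (-c))) z)) summable_on {1..} \<times> PL n"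
    by (simp add: case_prod_unfold)
  then have s1: "(\<lambda>(x,y). h x * (\<Prod>i<length y. real (y ! i) powr (-c))) summable_on {1..} \<times> PL n"
    by (rule Infinite_Sum.abs_summable_summable)
  have img: "PL (Suc n) = (\<lambda>(x,l). x # l) ` ({1..} \<times> PL n)"
  proof safe
    fix m assume "m \<in> PL (Suc n)"
    then obtain x l where "m = x # l" by (cases m) (auto simp: PL_def)
    with \<open>m \<in> PL (Suc n)\<close> show "m \<in> (\<lambda>(x,l). x # l) ` ({1..} \<times> PL n)"
      by (auto simp: PL_def image_iff intro!: bexI[of _ "(x,l)"])
  qed (auto simp: PL_def)
  have inj: "inj_on (\<lambda>(x,l). x # l) ({1..} \<times> PL n)" by (auto simp: inj_on_def)
  have eq: "(\<Prod>i<length (x#l). real ((x#l) ! i) powr (-c)) = h x * (\<Prod>i<length l. real (l ! i) powr (-c))" for x l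
    unfolding length_Cons prod.lessThan_Suc_shift by (simp add: h_def)
  show ?case unfolding img summable_on_reindex[OF inj]
    using s1 by (simp only: o_def case_prod_unfold eq)
qed


definition WL :: "nat \<Rightarrow> nat list set" where
  "WL n = {m. length m = n \<and> sorted_wrt (\<le>) m \<and> 0 \<notin> set m}"
definition SL :: "nat \<Rightarrow> nat list set" where
  "SL n = {m. length m = n \<and> sorted_wrt (<) m \<and> 0 \<notin> set m}"

lemma SL_sub_WL: "SL n \<subseteq> WL n"
  unfolding SL_def WL_def using strict_sorted_imp_sorted by auto

lemma norm_G: "norm (G m f) = (\<Prod>i<length m. real (m ! i) powr (- Re (f i)))"
  unfolding G_def prod_norm[symmetric]
  by (intro prod.cong refl) (simp add: norm_inverse norm_powr_real_powr powr_minus)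

lemma G_dom:
  assumes m: "m \<in> WL (Suc n')" and hf: "\<And>i. i < Suc n' \<Longrightarrow> Re (f i) \<ge> 1"
    and c: "c = 1 + (Re (f n') - 1) / Suc n'" and hl: "Re (f n') > 1"
  shows "norm (G m f) \<le> (\<Prod>i<length m. real (m ! i) powr (-c))"
proof -
  define \<epsilon> where "\<epsilon> = (Re (f n') - 1) / Suc n'"
  have \<epsilon>: "\<epsilon> > 0" using hl by (simp add: \<epsilon>_def)
  have len: "length m = Suc n'" using m by (simp add: WL_def)
  define k where "k i = real (m ! i)" for i
  have k1: "k i \<ge> 1" if "i < Suc n'" for i
  proof -
    have "m ! i \<in> set m" using that len by simp
    have "m ! i \<noteq> 0"
    proof
      assume "m ! i = 0" with \<open>m ! i \<in> set m\<close> m show False by (simp add: WL_def)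
    qed
    then show ?thesis by (simp add: k_def)
  qed
  define N where "N = k n'"
  have kN: "k i \<le> N" if "i < n'" for i
    using m that len unfolding N_def k_def WL_def
    by (auto intro!: sorted_nth_mono)
  have N1: "N \<ge> 1" using k1 by (simp add: N_def)
  have "norm (G m f) = (\<Prod>i<n'. k i powr (- Re (f i))) * N powr (- Re (f n'))"
    unfolding norm_G len by (simp add: k_def N_def)
  also have "\<dots> \<le> (\<Prod>i<n'. k i powr (-1)) * (N powr (-c) * (\<Prod>i<n'. k i powr (-\<epsilon>)))"
  proof (rule mult_mono)
    show "(\<Prod>i<n'. k i powr (- Re (f i))) \<le> (\<Prod>i<n'. k i powr (-1))"
    proof (intro prod_mono conjI)
      fix i assume "i \<in> {..<n'}"
      then have i: "i < Suc n'" by simp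
      show "k i powr (- Re (f i)) \<le> k i powr (-1)"
        by (rule powr_mono) (use hf[OF i] k1[OF i] in auto)
    qed simp
    have eq1: "N powr (- Re (f n')) = N powr (-c) * N powr (- (\<Sum>i<n'. \<epsilon>))"
    proof -
      have pos: "real (Suc n') \<noteq> 0" by simp
      have "- Re (f n') = -c + - (real n' * \<epsilon>)"
        unfolding c \<epsilon>_def using pos by (simp add: field_simps del: of_nat_Suc) (simp add: algebra_simps)
      then have "- Re (f n') = -c + - (\<Sum>i<n'. \<epsilon>)" by simp
      then show ?thesis by (simp add: powr_add[symmetric])
    qed
    have "N powr (- (\<Sum>i<n'. \<epsilon>)) = (\<Prod>i<n'. N powr (-\<epsilon>))"
      using N1 by (subst powr_sum[symmetric]) (auto simp: sum_negf)
    also have "\<dots> \<le> (\<Prod>i<n'. k i powr (-\<epsilon>))"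
      by (intro prod_mono conjI) (use \<epsilon> k1 kN in \<open>auto intro!: powr_mono2' less_le_trans[OF zero_less_one]\<close>)
    finally have "N powr (- (\<Sum>i<n'. \<epsilon>)) \<le> (\<Prod>i<n'. k i powr (-\<epsilon>))" .
    then show "N powr (- Re (f n')) \<le> N powr (-c) * (\<Prod>i<n'. k i powr (-\<epsilon>))"
      unfolding eq1 by (rule mult_left_mono) simp
  qed (auto intro!: prod_nonneg)
  also have "\<dots> = (\<Prod>i<n'. k i powr (-1) * k i powr (-\<epsilon>)) * N powr (-c)"
    by (simp only: prod.distrib ac_simps)
  also have "\<dots> = (\<Prod>i<n'. k i powr (-c)) * N powr (-c)"
  proof -
    have "k i powr (-1) * k i powr (-\<epsilon>) = k i powr (-c)" for i
      by (simp only: powr_add[symmetric], rule arg_cong[where f="\<lambda>x. k i powr x"], simp add: c \<epsilon>_def)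
    then show ?thesis by simp
  qed
  also have "\<dots> = (\<Prod>i<length m. real (m ! i) powr (-c))"
    unfolding len by (simp add: k_def N_def)
  finally show ?thesis .
qed

lemma G_summable:
  assumes n: "n > 0" and hf: "\<And>i. i < n \<Longrightarrow> Re (f i) \<ge> 1" and hl: "Re (f (n - 1)) > 1"
  shows "(\<lambda>m. G m f) summable_on WL n"
proof -
  obtain n' where n': "n = Suc n'" using n by (cases n) auto
  define c where "c = 1 + (Re (f n') - 1) / Suc n'"
  have c1: "c > 1" using hl n' by (simp add: c_def)
  have "(\<lambda>m. \<Prod>i<length m. real (m ! i) powr (-c)) summable_on WL n"
    by (rule summable_on_subset_banach[OF D_summable[OF c1, of n]]) (auto simp: WL_def PL_def)
  then have "(\<lambda>m. norm (G m f)) summable_on WL n"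
    by (rule summable_on_comparison_test)
       (use G_dom[of _ n' f c] hf hl n' c_def in auto)
  then show ?thesis by (rule Infinite_Sum.abs_summable_summable)
qed



definition A :: "(int \<Rightarrow> complex) \<Rightarrow> nat \<Rightarrow> nat \<Rightarrow> complex" where
  "A z j i = z (int j - int i)"
definition B :: "(int \<Rightarrow> complex) \<Rightarrow> nat \<Rightarrow> nat \<Rightarrow> complex" where
  "B z j i = z (int j + 1 + int i)"

lemma rev_upto_nth: "i < Suc (q + j) \<Longrightarrow> rev [- int q..int j] ! i = int j - int i"
  by (simp add: rev_nth nth_upto)

lemma mzeta_A: "mzeta (map z (rev [- int q..int j])) = infsum (\<lambda>u. G u (A z j)) (SL (Suc (q + j)))"
proof -
  have len: "length (map z (rev [- int q..int j])) = Suc (q + j)" by simp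
  show ?thesis unfolding mzeta_def len
  proof (rule infsum_cong_neutral)
    fix m assume "m \<in> {m. length m = Suc (q + j) \<and> sorted_wrt (<) m \<and> 0 \<notin> set m} \<inter> SL (Suc (q + j))"
    then have lm: "length m = Suc (q+j)" by (auto simp: SL_def)
    show "(\<Prod>i<Suc (q + j). inverse (of_nat (m ! i) powr map z (rev [- int q..int j]) ! i)) = G m (A z j)"
      unfolding G_def lm by (intro prod.cong refl) (simp add: rev_upto_nth A_def)
  qed (auto simp: SL_def)
qed

lemma mzeta_star_B: "j \<le> p \<Longrightarrow> mzeta_star (map z [int j + 1..int p]) = infsum (\<lambda>v. G v (B z j)) (WL (p - j))"
proof -
  assume jp: "j \<le> p"
  have len: "length (map z [int j + 1..int p]) = p - j" using jp by simp
  show ?thesis unfolding mzeta_star_def len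
  proof (rule infsum_cong_neutral)
    fix m assume "m \<in> {m. length m = p - j \<and> sorted_wrt (\<le>) m \<and> 0 \<notin> set m} \<inter> WL (p - j)"
    then have lm: "length m = p - j" by (auto simp: WL_def)
    show "(\<Prod>i<p - j. inverse (of_nat (m ! i) powr map z [int j + 1..int p] ! i)) = G m (B z j)"
      unfolding G_def lm by (intro prod.cong refl) (simp add: nth_upto B_def)
  qed (auto simp: WL_def)
qed



lemma A_summ:
  assumes hz: "\<And>k. - int q \<le> k \<Longrightarrow> k \<le> int p \<Longrightarrow> Re (z k) \<ge> 1"
    and hq: "Re (z (- int q)) > 1" and jp: "j \<le> p"
  shows "(\<lambda>u. G u (A z j)) summable_on SL (Suc (q + j))"
proof -
  have "(\<lambda>u. G u (A z j)) summable_on WL (Suc (q + j))"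
  proof (rule G_summable)
    fix i assume "i < Suc (q + j)"
    then show "1 \<le> Re (A z j i)" unfolding A_def using jp by (intro hz) auto
  next
    show "1 < Re (A z j (Suc (q + j) - 1))" using hq by (simp add: A_def)
  qed simp
  then show ?thesis by (rule summable_on_subset_banach) (rule SL_sub_WL)
qed

lemma WL0: "WL 0 = {[]}" by (auto simp: WL_def)

lemma B_summ:
  assumes hz: "\<And>k. - int q \<le> k \<Longrightarrow> k \<le> int p \<Longrightarrow> Re (z k) \<ge> 1"
    and hp: "Re (z (int p)) > 1" and jp: "j \<le> p"
  shows "(\<lambda>v. G v (B z j)) summable_on WL (p - j)"
proof (cases "j = p")
  case True then show ?thesis by (simp add: WL0)
next
  case False
  show ?thesis
  proof (rule G_summable)
    fix i assume "i < p - j"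
    then show "1 \<le> Re (B z j i)" unfolding B_def using jp by (intro hz) auto
  next
    have "int j + 1 + int (p - j - 1) = int p" using False jp by simp
    then show "1 < Re (B z j (p - j - 1))" using hp by (simp add: B_def)
  qed (use False jp in simp)
qed

definition F :: "(int \<Rightarrow> complex) \<Rightarrow> nat \<Rightarrow> nat list \<times> nat list \<Rightarrow> complex" where
  "F z j = (\<lambda>(u,v). G u (A z j) * G v (B z j))"
definition Pset :: "nat \<Rightarrow> nat \<Rightarrow> nat \<Rightarrow> (nat list \<times> nat list) set" where
  "Pset p q j = SL (Suc (q + j)) \<times> WL (p - j)"
definition Xs :: "nat \<Rightarrow> nat \<Rightarrow> nat \<Rightarrow> (nat list \<times> nat list) set" where
  "Xs p q j = {uv \<in> Pset p q j. snd uv = [] \<or> hd (fst uv) \<le> hd (snd uv)}"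
definition Ys :: "nat \<Rightarrow> nat \<Rightarrow> nat \<Rightarrow> (nat list \<times> nat list) set" where
  "Ys p q j = {uv \<in> Pset p q j. snd uv \<noteq> [] \<and> hd (snd uv) < hd (fst uv)}"

lemma F_summ:
  assumes "(\<lambda>u. G u (A z j)) summable_on S" "(\<lambda>v. G v (B z j)) summable_on W"
  shows "F z j summable_on S \<times> W"
proof -
  have "(\<lambda>(x,y). norm (G x (A z j) * G y (B z j))) summable_on S \<times> W"
    by (rule norm_summable_prod; rule summable_on_iff_abs_summable_on_complex[THEN iffD1]; rule assms)
  then have "(\<lambda>uv. norm (F z j uv)) summable_on S \<times> W"
    by (simp add: F_def case_prod_unfold)
  then show ?thesis by (rule Infinite_Sum.abs_summable_summable)
qed

lemma term_eq:
  assumes hz: "\<And>k. - int q \<le> k \<Longrightarrow> k \<le> int p \<Longrightarrow> Re (z k) \<ge> 1"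
    and hp: "Re (z (int p)) > 1" and hq: "Re (z (- int q)) > 1" and jp: "j \<le> p"
  shows "mzeta (map z (rev [- int q..int j])) * mzeta_star (map z [int j + 1..int p])
       = infsum (F z j) (Xs p q j) + infsum (F z j) (Ys p q j)"
proof -
  note sA = A_summ[of q p z, OF hz hq jp] and sB = B_summ[of q p z, OF hz hp jp]
  have sP: "F z j summable_on Pset p q j" unfolding Pset_def by (rule F_summ[OF sA sB])
  have "mzeta (map z (rev [- int q..int j])) * mzeta_star (map z [int j + 1..int p])
      = infsum (F z j) (Pset p q j)"
    unfolding mzeta_A mzeta_star_B[OF jp] Pset_def F_def by (rule infsum_prod[OF sA sB, symmetric])
  also have "Pset p q j = Xs p q j \<union> Ys p q j" by (auto simp: Xs_def Ys_def)
  also have "infsum (F z j) (Xs p q j \<union> Ys p q j) = infsum (F z j) (Xs p q j) + infsum (F z j) (Ys p q j)"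
    by (rule infsum_Un_disjoint)
       (auto intro: summable_on_subset_banach[OF sP] simp: Xs_def Ys_def)
  finally show ?thesis .
qed

lemma Ys_last: "Ys p q p = {}"
  by (auto simp: Ys_def Pset_def WL0)

lemma Ys_Xs:
  assumes jp: "j < p"
  shows "infsum (F z j) (Ys p q j) = infsum (F z (Suc j)) (Xs p q (Suc j))"
proof (rule infsum_reindex_bij_witness[where j = "\<lambda>(u,v). (hd v # u, tl v)" and i = "\<lambda>(u,v). (tl u, hd u # v)"])
  fix a assume a: "a \<in> Ys p q j"
  then obtain u y v where a_eq: "a = (u, y # v)"
    by (cases a; cases "snd a") (auto simp: Ys_def)
  show "(case case a of (u, v) \<Rightarrow> (hd v # u, tl v) of (u, v) \<Rightarrow> (tl u, hd u # v)) = a"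
    by (simp add: a_eq)
  from a obtain x u0 where u_eq: "u = x # u0"
    by (cases u) (auto simp: a_eq Ys_def Pset_def SL_def)
  from a have H: "length u0 = q + j" "sorted_wrt (<) (x # u0)" "0 \<notin> set (x # u0)"
    "length v = p - Suc j" "sorted_wrt (\<le>) (y # v)" "0 \<notin> set (y # v)" "y < x"
    by (auto simp: a_eq u_eq Ys_def Pset_def SL_def WL_def)
  show "(case a of (u, v) \<Rightarrow> (hd v # u, tl v)) \<in> Xs p q (Suc j)"
    using H by (cases v) (auto simp: a_eq u_eq Xs_def Pset_def SL_def WL_def)
  have eA: "(\<lambda>i. A z (Suc j) (Suc i)) = A z j" by (simp add: A_def fun_eq_iff)
  have eB: "(\<lambda>i. B z j (Suc i)) = B z (Suc j)" by (simp add: B_def fun_eq_iff algebra_simps)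
  show "F z (Suc j) (case a of (u, v) \<Rightarrow> (hd v # u, tl v)) = F z j a"
    by (simp add: a_eq F_def G_Cons eA eB) (simp add: A_def B_def algebra_simps)
next
  fix b assume b: "b \<in> Xs p q (Suc j)"
  then obtain x x1 u1 v where b_eq: "b = (x # x1 # u1, v)"
    by (cases b; cases "fst b"; cases "tl (fst b)") (auto simp: Xs_def Pset_def SL_def)
  show "(case case b of (u, v) \<Rightarrow> (tl u, hd u # v) of (u, v) \<Rightarrow> (hd v # u, tl v)) = b"
    by (simp add: b_eq)
  from b have H: "length u1 = q + j" "sorted_wrt (<) (x # x1 # u1)" "0 \<notin> set (x # x1 # u1)"
    "length v = p - Suc j" "sorted_wrt (\<le>) v" "0 \<notin> set v" "v = [] \<or> x \<le> hd v"
    by (auto simp: b_eq Xs_def Pset_def SL_def WL_def)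
  show "(case b of (u, v) \<Rightarrow> (tl u, hd u # v)) \<in> Ys p q j"
    using H jp by (cases v) (auto simp: b_eq Ys_def Pset_def SL_def WL_def)
qed

lemma telescope:
  fixes x :: "nat \<Rightarrow> complex"
  shows "(\<Sum>j=0..n. (-1) ^ j * (x j + x (Suc j))) = x 0 + (-1) ^ n * x (Suc n)"
  by (induction n) (auto simp: algebra_simps)



lemma yd_hook: "(a, b) \<in> young_diagram (Suc p # replicate q 1) \<longleftrightarrow>
   (b = 1 \<and> 1 \<le> a \<and> a \<le> Suc q) \<or> (a = 1 \<and> 2 \<le> b \<and> b \<le> Suc p)"
proof -
  have "(Suc p # replicate q 1) ! (a - 1) = (if a \<le> 1 then Suc p else 1)" if "a \<le> Suc q"
    using that by (cases "a - 1") (auto simp: nth_Cons split: nat.splits)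
  then show ?thesis unfolding young_diagram_def by (auto split: if_splits)
qed

lemma yd_hook_eq: "young_diagram (Suc p # replicate q 1) =
   (\<lambda>i. (Suc i, 1)) ` {..<Suc q} \<union> (\<lambda>k. (1, k + 2)) ` {..<p}"
proof (rule set_eqI)
  fix x :: "nat \<times> nat"
  obtain a b where x: "x = (a, b)" by (cases x)
  show "x \<in> young_diagram (Suc p # replicate q 1) \<longleftrightarrow> x \<in> (\<lambda>i. (Suc i, 1)) ` {..<Suc q} \<union> (\<lambda>k. (1, k + 2)) ` {..<p}"
  proof
    assume "x \<in> young_diagram (Suc p # replicate q 1)"
    then have "(b = 1 \<and> 1 \<le> a \<and> a \<le> Suc q) \<or> (a = 1 \<and> 2 \<le> b \<and> b \<le> Suc p)"
      unfolding x yd_hook .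
    then show "x \<in> (\<lambda>i. (Suc i, 1)) ` {..<Suc q} \<union> (\<lambda>k. (1, k + 2)) ` {..<p}"
    proof
      assume h: "b = 1 \<and> 1 \<le> a \<and> a \<le> Suc q"
      then have "x = (Suc (a - 1), 1)" "a - 1 \<in> {..<Suc q}" by (auto simp: x)
      then show ?thesis by blast
    next
      assume h: "a = 1 \<and> 2 \<le> b \<and> b \<le> Suc p"
      then have "x = (1, (b - 2) + 2)" "b - 2 \<in> {..<p}" by (auto simp: x)
      then show ?thesis by blast
    qed
  qed (unfold x yd_hook, auto)
qed


lemma prod_hook:
  fixes M :: "nat \<times> nat \<Rightarrow> nat"
  assumes hrow: "\<And>j. 1 \<le> j \<Longrightarrow> j \<le> p + 1 \<Longrightarrow> s (1, j) = z (int j - 1)"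
    and hcol: "\<And>i. 1 \<le> i \<Longrightarrow> i \<le> q + 1 \<Longrightarrow> s (i, 1) = z (- (int i - 1))"
  shows "(\<Prod>x\<in>young_diagram (Suc p # replicate q 1). inverse (of_nat (M x) powr s x))
    = G (map (\<lambda>i. M (Suc i, 1)) [0..<Suc q]) (A z 0) * G (map (\<lambda>k. M (1, k + 2)) [0..<p]) (B z 0)"
proof -
  have disj: "(\<lambda>i. (Suc i, 1::nat)) ` {..<Suc q} \<inter> (\<lambda>k. (1::nat, k + 2)) ` {..<p} = {}" by auto
  have inj1: "inj_on (\<lambda>i. (Suc i, 1::nat)) {..<Suc q}" by (auto simp: inj_on_def)
  have inj2: "inj_on (\<lambda>k. (1::nat, k + 2)) {..<p}" by (auto simp: inj_on_def)
  have "(\<Prod>x\<in>young_diagram (Suc p # replicate q 1). inverse (of_nat (M x) powr s x))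
     = (\<Prod>i<Suc q. inverse (of_nat (M (Suc i, 1)) powr s (Suc i, 1))) *
       (\<Prod>k<p. inverse (of_nat (M (1, k + 2)) powr s (1, k + 2)))"
    unfolding yd_hook_eq prod.union_disjoint[OF finite_imageI[OF finite_lessThan] finite_imageI[OF finite_lessThan] disj]
      prod.reindex[OF inj1] prod.reindex[OF inj2] o_def by (rule refl)
  also have "(\<Prod>i<Suc q. inverse (of_nat (M (Suc i, 1)) powr s (Suc i, 1))) = G (map (\<lambda>i. M (Suc i, 1)) [0..<Suc q]) (A z 0)"
  proof -
    have "s (Suc i, 1) = A z 0 i" if "i < Suc q" for i
      using hcol[of "Suc i"] that by (simp add: A_def)
    then show ?thesis unfolding G_def by (intro prod.cong) (auto simp del: upt_Suc)
  qed
  also have "(\<Prod>k<p. inverse (of_nat (M (1, k + 2)) powr s (1, k + 2))) = G (map (\<lambda>k. M (1, k + 2)) [0..<p]) (B z 0)"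
  proof -
    have "s (1, k + 2) = B z 0 k" if "k < p" for k
      using hrow[of "k+2"] that by (simp add: B_def algebra_simps)
    then show ?thesis unfolding G_def by (intro prod.cong) auto
  qed
  finally show ?thesis .
qed


lemma SSYT_hookD:
  assumes M: "M \<in> SSYT (Suc p # replicate q 1)"
  shows "\<And>i. 1 \<le> i \<Longrightarrow> i \<le> Suc q \<Longrightarrow> 1 \<le> M (i, 1)"
    and "\<And>j. 2 \<le> j \<Longrightarrow> j \<le> Suc p \<Longrightarrow> 1 \<le> M (1, j)"
    and "\<And>a b. \<not> ((b = 1 \<and> 1 \<le> a \<and> a \<le> Suc q) \<or> (a = 1 \<and> 2 \<le> b \<and> b \<le> Suc p)) \<Longrightarrow> M (a, b) = 0"
    and "\<And>j. 1 \<le> j \<Longrightarrow> j < Suc p \<Longrightarrow> M (1, j) \<le> M (1, Suc j)"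
    and "\<And>i. 1 \<le> i \<Longrightarrow> i < Suc q \<Longrightarrow> M (i, 1) < M (Suc i, 1)"
proof -
  let ?D = "young_diagram (Suc p # replicate q 1)"
  have h1: "\<forall>x\<in>?D. 1 \<le> M x" and h2: "\<forall>x. x \<notin> ?D \<longrightarrow> M x = 0"
    and h3: "\<forall>i j. (i,j) \<in> ?D \<and> (i, Suc j) \<in> ?D \<longrightarrow> M (i,j) \<le> M (i, Suc j)"
    and h4: "\<forall>i j. (i,j) \<in> ?D \<and> (Suc i, j) \<in> ?D \<longrightarrow> M (i,j) < M (Suc i, j)"
    using M unfolding SSYT_def by blast+
  show "1 \<le> M (i, 1)" if "1 \<le> i" "i \<le> Suc q" for i
    using h1 that unfolding Ball_def split_paired_All yd_hook by blast
  show "1 \<le> M (1, j)" if "2 \<le> j" "j \<le> Suc p" for j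
    using h1 that unfolding Ball_def split_paired_All yd_hook by blast
  show "M (a, b) = 0" if "\<not> ((b = 1 \<and> 1 \<le> a \<and> a \<le> Suc q) \<or> (a = 1 \<and> 2 \<le> b \<and> b \<le> Suc p))" for a b
    using h2 that unfolding split_paired_All yd_hook by blast
  show "M (1, j) \<le> M (1, Suc j)" if "1 \<le> j" "j < Suc p" for j
  proof -
    have "(1, j) \<in> ?D" "(1, Suc j) \<in> ?D" using that unfolding yd_hook by auto
    then show ?thesis using h3 by blast
  qed
  show "M (i, 1) < M (Suc i, 1)" if "1 \<le> i" "i < Suc q" for i
  proof -
    have "(i, 1) \<in> ?D" "(Suc i, 1) \<in> ?D" using that unfolding yd_hook by auto
    then show ?thesis using h4 by blast
  qed
qed

lemma SSYT_hookI:
  assumes "\<And>i. 1 \<le> i \<Longrightarrow> i \<le> Suc q \<Longrightarrow> 1 \<le> M (i, 1)"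
    and "\<And>j. 2 \<le> j \<Longrightarrow> j \<le> Suc p \<Longrightarrow> 1 \<le> M (1, j)"
    and "\<And>a b. \<not> ((b = 1 \<and> 1 \<le> a \<and> a \<le> Suc q) \<or> (a = 1 \<and> 2 \<le> b \<and> b \<le> Suc p)) \<Longrightarrow> M (a, b) = 0"
    and "\<And>j. 1 \<le> j \<Longrightarrow> j < Suc p \<Longrightarrow> M (1, j) \<le> M (1, Suc j)"
    and "\<And>i. 1 \<le> i \<Longrightarrow> i < Suc q \<Longrightarrow> M (i, 1) < M (Suc i, 1)"
  shows "M \<in> SSYT (Suc p # replicate q 1)"
  unfolding SSYT_def mem_Collect_eq Ball_def split_paired_All yd_hook
proof (intro conjI allI impI)
  fix a b assume "b = 1 \<and> 1 \<le> a \<and> a \<le> Suc q \<or> a = 1 \<and> 2 \<le> b \<and> b \<le> Suc p"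
  then show "1 \<le> M (a, b)" using assms(1,2) by auto
next
  fix a b assume "\<not> (b = 1 \<and> 1 \<le> a \<and> a \<le> Suc q \<or> a = 1 \<and> 2 \<le> b \<and> b \<le> Suc p)"
  then show "M (a, b) = 0" using assms(3) by blast
next
  fix i j assume "(j = 1 \<and> 1 \<le> i \<and> i \<le> Suc q \<or> i = 1 \<and> 2 \<le> j \<and> j \<le> Suc p) \<and>
       (Suc j = 1 \<and> 1 \<le> i \<and> i \<le> Suc q \<or> i = 1 \<and> 2 \<le> Suc j \<and> Suc j \<le> Suc p)"
  then show "M (i, j) \<le> M (i, Suc j)" using assms(4) by auto
next
  fix i j assume "(j = 1 \<and> 1 \<le> i \<and> i \<le> Suc q \<or> i = 1 \<and> 2 \<le> j \<and> j \<le> Suc p) \<and>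
       (j = 1 \<and> 1 \<le> Suc i \<and> Suc i \<le> Suc q \<or> Suc i = 1 \<and> 2 \<le> j \<and> j \<le> Suc p)"
  then show "M (i, j) < M (Suc i, j)" using assms(5) by auto
qed


lemma ss2: "2 \<le> b \<Longrightarrow> Suc (Suc (b - 2)) = b" by arith

definition phi :: "nat \<Rightarrow> nat \<Rightarrow> (nat \<times> nat \<Rightarrow> nat) \<Rightarrow> nat list \<times> nat list" where
  "phi p q M = (map (\<lambda>i. M (Suc i, 1)) [0..<Suc q], map (\<lambda>k. M (1, k + 2)) [0..<p])"
definition psi :: "nat \<Rightarrow> nat \<Rightarrow> nat list \<times> nat list \<Rightarrow> nat \<times> nat \<Rightarrow> nat" where
  "psi p q uv = (\<lambda>(a,b). if b = 1 \<and> 1 \<le> a \<and> a \<le> Suc q then fst uv ! (a - 1)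
      else if a = 1 \<and> 2 \<le> b \<and> b \<le> Suc p then snd uv ! (b - 2) else 0)"

lemma schur_X:
  assumes hrow: "\<And>j. 1 \<le> j \<Longrightarrow> j \<le> p + 1 \<Longrightarrow> s (1, j) = z (int j - 1)"
    and hcol: "\<And>i. 1 \<le> i \<Longrightarrow> i \<le> q + 1 \<Longrightarrow> s (i, 1) = z (- (int i - 1))"
  shows "schur_zeta (Suc p # replicate q 1) s = infsum (F z 0) (Xs p q 0)"
  unfolding schur_zeta_def
proof (rule infsum_reindex_bij_witness[where j = "phi p q" and i = "psi p q"])
  fix M assume M: "M \<in> SSYT (Suc p # replicate q 1)"
  note D = SSYT_hookD[OF M]
  show "psi p q (phi p q M) = M"
  proof (rule ext, clarify)
    fix a b
    show "psi p q (phi p q M) (a, b) = M (a, b)"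
      using D(3)[of b a] by (auto simp: psi_def phi_def nth_append ss2 simp del: upt_Suc)
  qed
  have su: "sorted_wrt (<) (map (\<lambda>i. M (Suc i, 1)) [0..<Suc q])"
  proof -
    have "M (Suc i, 1) < M (Suc (Suc i), 1)" if "i < q" for i using D(5)[of "Suc i"] that by simp
    then show ?thesis by (subst sorted_wrt_iff_nth_Suc_transp) (auto simp del: upt_Suc)
  qed
  have sv: "sorted (map (\<lambda>k. M (1, k + 2)) [0..<p])"
  proof -
    have "M (1, i + 2) \<le> M (1, Suc i + 2)" if "Suc i < p" for i using D(4)[of "i+2"] that by simp
    then show ?thesis unfolding sorted_iff_nth_Suc by (auto simp del: upt_Suc)
  qed
  have pu: "0 \<notin> set (map (\<lambda>i. M (Suc i, 1)) [0..<Suc q])"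
  proof -
    have "M (Suc i, 1) \<noteq> 0" if "i < Suc q" for i using D(1)[of "Suc i"] that by simp
    then show ?thesis by (force simp del: upt_Suc)
  qed
  have pv: "0 \<notin> set (map (\<lambda>k. M (1, k + 2)) [0..<p])"
  proof -
    have "M (1, k + 2) \<noteq> 0" if "k < p" for k using D(2)[of "k + 2"] that by simp
    then show ?thesis by force
  qed
  have hd: "map (\<lambda>k. M (1, k + 2)) [0..<p] = [] \<or> hd (map (\<lambda>i. M (Suc i, 1)) [0..<Suc q]) \<le> hd (map (\<lambda>k. M (1, k + 2)) [0..<p])"
  proof (cases p)
    case (Suc p')
    have "M (1, 1) \<le> M (1, 2)" using D(4)[of 1] Suc by (simp add: numeral_2_eq_2)
    then show ?thesis using Suc by (simp add: hd_map upt_conv_Cons numeral_2_eq_2 del: upt_Suc)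
  qed simp
  show "phi p q M \<in> Xs p q 0"
    using su sv pu pv hd unfolding Xs_def Pset_def phi_def SL_def WL_def by (simp del: upt_Suc)
  show "F z 0 (phi p q M) = (\<Prod>x\<in>young_diagram (Suc p # replicate q 1). inverse (of_nat (M x) powr s x))"
    using prod_hook[OF hrow hcol, where M=M] by (simp add: F_def phi_def del: upt_Suc)
next
  fix uv assume uv: "uv \<in> Xs p q 0"
  obtain u v where uv_eq: "uv = (u, v)" by (cases uv)
  have H: "length u = Suc q" "sorted_wrt (<) u" "0 \<notin> set u"
    "length v = p" "sorted v" "0 \<notin> set v" "v = [] \<or> hd u \<le> hd v"
    using uv by (auto simp: uv_eq Xs_def Pset_def SL_def WL_def)
  show "phi p q (psi p q uv) = uv"
    unfolding uv_eq phi_def psi_def using H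
    by (auto intro!: nth_equalityI simp del: upt_Suc)
  show "psi p q uv \<in> SSYT (Suc p # replicate q 1)"
  proof (rule SSYT_hookI)
    show "1 \<le> psi p q uv (i, 1)" if "1 \<le> i" "i \<le> Suc q" for i
    proof -
      have "u ! (i - 1) \<in> set u" using that H by auto
      then have "u ! (i - 1) \<noteq> 0" using H by metis
      then show ?thesis using that by (auto simp: psi_def uv_eq)
    qed
    show "1 \<le> psi p q uv (1, j)" if "2 \<le> j" "j \<le> Suc p" for j
    proof -
      have "v ! (j - 2) \<in> set v" using that H by auto
      then have "v ! (j - 2) \<noteq> 0" using H by metis
      then show ?thesis using that by (auto simp: psi_def uv_eq)
    qed
    show "psi p q uv (a, b) = 0" if "\<not> ((b = 1 \<and> 1 \<le> a \<and> a \<le> Suc q) \<or> (a = 1 \<and> 2 \<le> b \<and> b \<le> Suc p))" for a b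
      using that by (auto simp: psi_def)
    show "psi p q uv (1, j) \<le> psi p q uv (1, Suc j)" if "1 \<le> j" "j < Suc p" for j
    proof (cases "j = 1")
      case True
      then have "v \<noteq> []" using that H by auto
      then have "u ! 0 \<le> v ! 0" using H by (cases u; cases v) auto
      then show ?thesis using True that by (auto simp: psi_def uv_eq)
    next
      case False
      then have "v ! (j - 2) \<le> v ! (Suc j - 2)" using that H by (intro sorted_nth_mono) auto
      then show ?thesis using False that by (auto simp: psi_def uv_eq)
    qed
    show "psi p q uv (i, 1) < psi p q uv (Suc i, 1)" if "1 \<le> i" "i < Suc q" for i
    proof -
      have "u ! (i - 1) < u ! (Suc i - 1)" using sorted_wrt_nth_less[OF H(2), of "i - 1" i] that H(1) by simp
      then show ?thesis using that by (auto simp: psi_def uv_eq)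
    qed
  qed
qed


theorem theorem3p1:
  fixes p q :: nat and z :: "int \<Rightarrow> complex" and s :: "nat \<times> nat \<Rightarrow> complex"
  assumes hz: "\<And>k. - int q \<le> k \<Longrightarrow> k \<le> int p \<Longrightarrow> Re (z k) \<ge> 1"
    and hp: "Re (z (int p)) > 1"
    and hq: "Re (z (- int q)) > 1"
    and hrow: "\<And>j. 1 \<le> j \<Longrightarrow> j \<le> p + 1 \<Longrightarrow> s (1, j) = z (int j - 1)"
    and hcol: "\<And>i. 1 \<le> i \<Longrightarrow> i \<le> q + 1 \<Longrightarrow> s (i, 1) = z (- (int i - 1))"
  shows "schur_zeta ((p + 1) # replicate q 1) s =
    (\<Sum>j=0..p. (-1) ^ j * mzeta (map z (rev [- int q..int j]))
                        * mzeta_star (map z [int j + 1..int p]))"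
proof -
  define x where "x j = (if j \<le> p then infsum (F z j) (Xs p q j) else 0)" for j
  have T: "mzeta (map z (rev [- int q..int j])) * mzeta_star (map z [int j + 1..int p]) = x j + x (Suc j)"
    if jp: "j \<le> p" for j
  proof (cases "j < p")
    case True
    show ?thesis using term_eq[OF hz hp hq jp] Ys_Xs[OF True, of z q] True by (simp add: x_def)
  next
    case False
    then have "j = p" using jp by simp
    then show ?thesis using term_eq[OF hz hp hq jp] by (simp add: x_def Ys_last)
  qed
  have "(\<Sum>j=0..p. (-1) ^ j * mzeta (map z (rev [- int q..int j])) * mzeta_star (map z [int j + 1..int p]))
      = (\<Sum>j=0..p. (-1) ^ j * (x j + x (Suc j)))"
    by (intro sum.cong refl) (simp add: T mult.assoc)
  also have "\<dots> = x 0" unfolding telescope by (simp add: x_def)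
  also have "\<dots> = schur_zeta ((p + 1) # replicate q 1) s"
    using schur_X[OF hrow hcol] by (simp add: x_def)
  finally show ?thesis by simp
qed


end
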